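(* Let $U^{(n)}$ be uniformly distributed on $\{1,\dots,n\}$ and put $\widetilde U^{(n)}:=\prod_{p\le n,\ p\ \text{prime}}p^{\mathbbm{1}_{\{\lambda_p(U^{(n)})\ge1\}}}$. Then, as $n\to\infty$, $$\mathbb{E}\bigl(\log U^{(n)}-\log\widetilde U^{(n)}\bigr)^4=O(1)$$ and $$\mathbb{E}\bigl(\log U^{(n)}-\log\widetilde U^{(n)}-\mathbb{E}\log U^{(n)}+\mathbb{E}\log\widetilde U^{(n)}\bigr)^4=O(1).$$
   Context: For a prime $p$ and $k\in\mathbb{N}$, $\lambda_p(k)$ is the exponent of $p$ in the prime factorization of $k$, i.e. $k=\prod_p p^{\lambda_p(k)}$. *)

theory Defs
  imports "HOL-Probability.Probability" "HOL-Computational_Algebra.Primes" "HOL-Library.Landau_Symbols"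
begin

definition utilde :: "nat \<Rightarrow> nat \<Rightarrow> nat" where
  "utilde n k = (\<Prod>p\<in>{p. prime p \<and> p \<le> n}. p ^ (if multiplicity p k \<ge> 1 then 1 else 0))"

definition EU :: "nat \<Rightarrow> (nat \<Rightarrow> real) \<Rightarrow> real" where
  "EU n f = measure_pmf.expectation (pmf_of_set {1..n}) f"

end

theory Submission imports Defs "HOL-Analysis.Analysis" begin

definition rad :: "nat \<Rightarrow> nat" where "rad k = (\<Prod>p\<in>prime_factors k. p)"

lemma rad_dvd: assumes "k > 0" shows "rad k dvd k"
proof -
  have "rad k dvd (\<Prod>p \<in> prime_factors k. p ^ multiplicity p k)"
    unfolding rad_def
  proof (rule prod_dvd_prod)
    fix p assume "p \<in> prime_factors k"
    hence "multiplicity p k \<ge> 1" using assms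
      by (simp add: prime_multiplicity_gt_zero_iff in_prime_factors_iff Suc_le_eq)
    thus "p dvd p ^ multiplicity p k" by (simp add: dvd_power)
  qed
  also have "\<dots> = k" using assms by (subst prod_prime_factors) auto
  finally show ?thesis .
qed

lemma rad_mono: assumes "s dvd k" "k > 0" shows "rad s dvd rad k"
proof -
  have "s > 0" using assms by auto
  have "prime_factors s \<subseteq> prime_factors k" using assms \<open>s>0\<close>
    by (auto simp: in_prime_factors_iff intro: dvd_trans)
  thus ?thesis unfolding rad_def by (intro prod_dvd_prod_subset) auto
qed

lemma rad_mult_prime: assumes "prime p" "\<not> p dvd r" "r > 0" shows "rad (p * r) = p * rad r"
proof -
  have "prime_factors (p * r) = insert p (prime_factors r)"
    using assms by (simp add: prime_factors_product prime_prime_factors prime_gt_0_nat[THEN less_imp_neq, symmetric])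
  moreover have "p \<notin> prime_factors r" using assms by (simp add: in_prime_factors_iff)
  ultimately show ?thesis unfolding rad_def by simp
qed

lemma rad_pos: "rad k > 0"
  unfolding rad_def by (rule prod_pos) (auto simp: in_prime_factors_iff prime_gt_0_nat)

lemma sq_part: "k > 0 \<Longrightarrow> \<exists>a>0. a^2 dvd k \<and> k \<le> rad k * a^2"
proof (induction k rule: less_induct)
  case (less k)
  show ?case
  proof (cases "k = 1")
    case True thus ?thesis by (intro exI[of _ 1]) (simp add: rad_def)
  next
    case False
    then obtain p where p: "prime p" "p dvd k" using prime_factor_nat by blast
    have p2: "p \<ge> 2" using p prime_ge_2_nat by blast
    show ?thesis
    proof (cases "p^2 dvd k")
      case True
      then obtain s where s: "k = p^2 * s" by blast
      have "s > 0" using s less by auto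
      have "p*p \<ge> 2*2" using mult_le_mono[OF p2 p2] .
      hence "s < k" using s \<open>s>0\<close> by (simp add: power2_eq_square)
      then obtain a where a: "a > 0" "a^2 dvd s" "s \<le> rad s * a^2" using less \<open>s>0\<close> by blast
      have "rad s \<le> rad k" using rad_mono[of s k] s less rad_pos[of k] by (auto intro: dvd_imp_le)
      show ?thesis
      proof (intro exI[of _ "p*a"] conjI)
        show "p * a > 0" using a p2 by simp
        show "(p*a)^2 dvd k" using a s by (simp add: power_mult_distrib)
        have "k = p^2 * s" by fact
        also have "\<dots> \<le> p^2 * (rad s * a^2)" using a by simp
        also have "\<dots> \<le> p^2 * (rad k * a^2)" using \<open>rad s \<le> rad k\<close> by simp
        finally show "k \<le> rad k * (p*a)^2" by (simp add: power_mult_distrib mult_ac)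
      qed
    next
      case False
      obtain r where r: "k = p * r" using p by blast
      have "r > 0" using r less by auto
      have "\<not> p dvd r" using False r by (auto simp: power2_eq_square)
      have "r < k" using r p2 \<open>r>0\<close> by simp
      then obtain a where a: "a > 0" "a^2 dvd r" "r \<le> rad r * a^2" using less \<open>r>0\<close> by blast
      have "rad k = p * rad r" using rad_mult_prime[OF p(1) \<open>\<not> p dvd r\<close> \<open>r>0\<close>] r by simp
      show ?thesis
        using a r \<open>rad k = p * rad r\<close> by (intro exI[of _ a]) (auto simp: mult_ac)
    qed
  qed
qed

lemma utilde_rad: assumes "0 < k" "k \<le> n" shows "utilde n k = rad k"
proof -
  have "utilde n k = (\<Prod>p\<in>{p. prime p \<and> p \<le> n}. if p dvd k then p else 1)"
    unfolding utilde_def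
    by (intro prod.cong refl) (use assms in \<open>auto simp: prime_multiplicity_gt_zero_iff Suc_le_eq\<close>)
  also have "\<dots> = (\<Prod>p\<in>{p. prime p \<and> p \<le> n} \<inter> {p. p dvd k}. p)"
    by (subst prod.inter_filter[symmetric]) (auto simp: Int_def)
  also have "{p. prime p \<and> p \<le> n} \<inter> {p. p dvd k} = prime_factors k"
    using assms by (auto simp: in_prime_factors_iff intro: le_trans[OF dvd_imp_le])
  finally show ?thesis by (simp add: rad_def)
qed


lemma ln_pow4_le: assumes "(a::real) \<ge> 1" shows "ln a ^ 4 \<le> 4096 * a powr (1/2)"
proof -
  have "ln (a powr (1/8)) \<le> a powr (1/8) - 1" using assms by (intro ln_le_minus_one) auto
  hence "ln a / 8 \<le> a powr (1/8)" using assms by (simp add: ln_powr)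
  hence "ln a \<le> 8 * a powr (1/8)" by simp
  hence "ln a ^ 4 \<le> (8 * a powr (1/8)) ^ 4" using assms by (intro power_mono) auto
  also have "\<dots> = 4096 * (a powr (1/8)) ^ 4" by (simp add: power_mult_distrib)
  also have "(a powr (1/8)) ^ 4 = a powr (1/2)" using assms by (subst powr_power) auto
  finally show ?thesis .
qed

lemma term_bound: assumes "a \<ge> 1"
  shows "(2 * ln (real a)) ^ 4 / (real a)^2 \<le> 65536 * real a powr (-3/2)"
proof -
  have "(2 * ln (real a)) ^ 4 = 16 * ln (real a) ^ 4" by (simp add: power_mult_distrib)
  also have "\<dots> \<le> 16 * (4096 * real a powr (1/2))" using ln_pow4_le[of "real a"] assms by simp
  finally have h: "(2 * ln (real a)) ^ 4 / (real a)^2 \<le> 65536 * real a powr (1/2) / (real a) ^ 2"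
    using assms by (simp add: divide_right_mono)
  have "real a powr (1/2) / (real a) ^ 2 = real a powr (1/2) / real a powr 2" using assms by simp
  also have "\<dots> = real a powr (-3/2)" proof -
    have "real a powr (-3/2) = real a powr (1/2 - 2)" by simp
    also have "\<dots> = real a powr (1/2) / real a powr 2" by (rule powr_diff)
    finally show ?thesis by simp
  qed
  finally show ?thesis using h by simp
qed

lemma card_mult_le: assumes "d > 0" shows "real (card {k\<in>{1..n}. d dvd k}) \<le> real n / real d"
proof -
  have "card {k\<in>{1..n}. d dvd k} \<le> card {1..n div d}"
  proof (rule card_inj_on_le)
    show "inj_on (\<lambda>k. k div d) {k\<in>{1..n}. d dvd k}"
      by (auto simp: inj_on_def elim!: dvdE)
    show "(\<lambda>k. k div d) ` {k\<in>{1..n}. d dvd k} \<subseteq> {1..n div d}"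
      using assms by (auto elim!: dvdE simp: less_eq_div_iff_mult_less_eq mult.commute)
  qed auto
  hence "real (card {k\<in>{1..n}. d dvd k}) \<le> real (n div d)" by simp
  also have "\<dots> \<le> real n / real d" by (simp add: of_nat_div_le_of_nat)
  finally show ?thesis .
qed

definition SS :: real where "SS = suminf (\<lambda>a. real a powr (-3/2))"

lemma summ: "summable (\<lambda>a. real a powr (-3/2))"
  by (subst summable_real_powr_iff) simp

definition D :: "nat \<Rightarrow> real" where "D k = ln (real k) - ln (real (rad k))"

lemma D_bound: assumes "1 \<le> k" "k \<le> n"
  shows "D k ^ 4 \<le> (\<Sum>a\<in>{a\<in>{1..n}. a^2 dvd k}. (2 * ln (real a)) ^ 4)"
proof -
  obtain a where a: "a > 0" "a^2 dvd k" "k \<le> rad k * a^2" using sq_part[of k] assms by auto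
  have "a \<le> a^2" by (simp add: power2_eq_square)
  also have "a^2 \<le> k" using a assms by (intro dvd_imp_le) auto
  finally have "a \<le> n" using assms by simp
  have rk: "rad k \<le> k" using rad_dvd[of k] assms by (auto intro: dvd_imp_le)
  have rp: "rad k > 0" by (rule rad_pos)
  have "0 \<le> D k" unfolding D_def using rk rp by simp
  moreover have "D k \<le> 2 * ln (real a)"
  proof -
    have "real k \<le> real (rad k) * real a ^ 2" using a by (metis of_nat_le_iff of_nat_mult of_nat_power)
    hence "ln (real k) \<le> ln (real (rad k) * real a ^ 2)" using assms by simp
    also have "\<dots> = ln (real (rad k)) + 2 * ln (real a)" using rp a by (simp add: ln_mult ln_realpow)
    finally show ?thesis unfolding D_def by simp
  qed
  ultimately have "D k ^ 4 \<le> (2 * ln (real a)) ^ 4" by (intro power_mono) auto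
  also have "\<dots> \<le> (\<Sum>a\<in>{a\<in>{1..n}. a^2 dvd k}. (2 * ln (real a)) ^ 4)"
    by (rule member_le_sum) (use a \<open>a \<le> n\<close> in auto)
  finally show ?thesis .
qed

lemma main_bound: "(\<Sum>k\<in>{1..n}. D k ^ 4) \<le> real n * (65536 * SS)"
proof -
  let ?f = "\<lambda>a. (2 * ln (real a)) ^ 4"
  have "(\<Sum>k\<in>{1..n}. D k ^ 4) \<le> (\<Sum>k\<in>{1..n}. \<Sum>a\<in>{a\<in>{1..n}. a^2 dvd k}. ?f a)"
    by (intro sum_mono D_bound) auto
  also have "\<dots> = (\<Sum>k\<in>{1..n}. \<Sum>a\<in>{1..n}. if a^2 dvd k then ?f a else 0)"
    by (rule sum.cong[OF refl]) (rule sum.inter_filter, simp)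
  also have "\<dots> = (\<Sum>a\<in>{1..n}. \<Sum>k\<in>{1..n}. if a^2 dvd k then ?f a else 0)"
    by (rule sum.swap)
  also have "\<dots> = (\<Sum>a\<in>{1..n}. ?f a * real (card {k\<in>{1..n}. a^2 dvd k}))"
    by (simp add: sum.inter_filter[symmetric] mult.commute)
  also have "\<dots> \<le> (\<Sum>a\<in>{1..n}. ?f a * (real n / real (a^2)))"
    by (intro sum_mono mult_left_mono card_mult_le) auto
  also have "\<dots> = real n * (\<Sum>a\<in>{1..n}. ?f a / (real a)^2)"
    by (simp add: sum_distrib_left mult_ac)
  also have "\<dots> \<le> real n * (\<Sum>a\<in>{1..n}. 65536 * real a powr (-3/2))"
    by (intro mult_left_mono sum_mono term_bound) auto
  also have "\<dots> \<le> real n * (65536 * SS)"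
    unfolding SS_def sum_distrib_left[symmetric]
    by (intro mult_left_mono sum_le_suminf summ) auto
  finally show ?thesis .
qed


lemma EU_eq: "n \<ge> 1 \<Longrightarrow> EU n f = sum f {1..n} / real n"
  unfolding EU_def by (subst integral_pmf_of_set) auto

lemma quart: "((x::real) - y) ^ 4 \<le> 8 * (x ^ 4 + y ^ 4)"
proof -
  have a: "(x - y)^2 \<le> 2 * (x^2 + y^2)" using sum_squares_ge_zero[of "x+y" 0]
    by (simp add: power2_eq_square algebra_simps)
  have "(x - y)^4 = ((x-y)^2)^2" by simp
  also have "\<dots> \<le> (2 * (x^2 + y^2))^2" using a by (intro power_mono) auto
  also have "\<dots> \<le> 8 * (x^4 + y^4)" using zero_le_square[of "x^2 - y^2"]
    by (simp add: power2_eq_square algebra_simps power4_eq_xxxx)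
  finally show ?thesis .
qed

lemma abs_le_quart: "\<bar>x::real\<bar> \<le> 1 + x ^ 4"
proof (cases "\<bar>x\<bar> \<le> 1")
  case False
  hence "\<bar>x\<bar> * 1 \<le> \<bar>x\<bar> * \<bar>x\<bar>^3" by (intro mult_left_mono) (auto simp: one_le_power)
  thus ?thesis by (simp add: power4_eq_xxxx power3_eq_cube power_abs[symmetric] algebra_simps)
qed (smt (verit) zero_le_power_eq_numeral even_numeral)

theorem lemma5p3:
  shows "(\<lambda>n. EU n (\<lambda>k. (ln (real k) - ln (real (utilde n k))) ^ 4))
           \<in> O[sequentially](\<lambda>_. 1) \<and>
         (\<lambda>n. EU n (\<lambda>k. (ln (real k) - ln (real (utilde n k))
                          - EU n (\<lambda>j. ln (real j)) + EU n (\<lambda>j. ln (real (utilde n j)))) ^ 4))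
           \<in> O[sequentially](\<lambda>_. 1)"
proof -
  define B where "B = 65536 * SS"
  have ev: "eventually (\<lambda>n. n \<ge> (1::nat)) sequentially" by (rule eventually_ge_at_top)
  have repl: "\<And>n g. n \<ge> 1 \<Longrightarrow> (\<Sum>k\<in>{1..n}. g (ln (real k) - ln (real (utilde n k)))) = (\<Sum>k\<in>{1..n}. g (D k))"
    by (intro sum.cong refl) (auto simp: D_def utilde_rad)
  have E4: "EU n (\<lambda>k. (ln (real k) - ln (real (utilde n k))) ^ 4) = (\<Sum>k\<in>{1..n}. D k ^ 4) / n"
    if "n \<ge> 1" for n using that repl[OF that, of "\<lambda>x. x^4"] by (simp add: EU_eq)
  have B1: "(\<Sum>k\<in>{1..n}. D k ^ 4) / n \<le> B" if "n \<ge> 1" for n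
    using main_bound[of n] that by (simp add: B_def divide_le_eq mult.commute)
  have B0: "0 \<le> (\<Sum>k\<in>{1..n}. D k ^ 4) / n" for n by (intro divide_nonneg_nonneg sum_nonneg) auto
  have part1: "(\<lambda>n. EU n (\<lambda>k. (ln (real k) - ln (real (utilde n k))) ^ 4)) \<in> O[sequentially](\<lambda>_. 1)"
  proof (rule bigoI[where c=B], rule eventually_mono[OF ev])
    fix n :: nat assume n: "n \<ge> 1"
    show "norm (EU n (\<lambda>k. (ln (real k) - ln (real (utilde n k))) ^ 4)) \<le> B * norm (1::real)"
      using E4[OF n] B1[OF n] B0[of n] by simp
  qed
  have part2: "(\<lambda>n. EU n (\<lambda>k. (ln (real k) - ln (real (utilde n k))
                          - EU n (\<lambda>j. ln (real j)) + EU n (\<lambda>j. ln (real (utilde n j)))) ^ 4))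
           \<in> O[sequentially](\<lambda>_. 1)"
  proof (rule bigoI[where c="8 * (B + (1 + B)^4)"], rule eventually_mono[OF ev])
    fix n :: nat assume n: "n \<ge> 1"
    define c where "c = EU n (\<lambda>j. ln (real j)) - EU n (\<lambda>j. ln (real (utilde n j)))"
    have c_eq: "c = (\<Sum>k\<in>{1..n}. D k) / n"
      unfolding c_def using n repl[of n "\<lambda>x. x", OF n]
      by (simp add: EU_eq diff_divide_distrib[symmetric] sum_subtractf)
    have "\<bar>\<Sum>k\<in>{1..n}. D k\<bar> \<le> (\<Sum>k\<in>{1..n}. 1 + D k ^ 4)"
      by (rule order.trans[OF sum_abs sum_mono]) (rule abs_le_quart)
    also have "\<dots> = n + (\<Sum>k\<in>{1..n}. D k ^ 4)" by (simp add: sum.distrib)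
    also have "\<dots> \<le> n + n * B" using main_bound[of n] by (simp add: B_def)
    finally have "\<bar>c\<bar> \<le> 1 + B" unfolding c_eq using n
      by (simp add: abs_div divide_le_eq algebra_simps)
    hence c4: "c ^ 4 \<le> (1 + B) ^ 4"
      by (metis abs_ge_zero power_abs power_mono power_even_abs even_numeral)
    have "EU n (\<lambda>k. (ln (real k) - ln (real (utilde n k)) - EU n (\<lambda>j. ln (real j))
             + EU n (\<lambda>j. ln (real (utilde n j)))) ^ 4) = (\<Sum>k\<in>{1..n}. (D k - c) ^ 4) / n"
      using n repl[of n "\<lambda>x. (x - c)^4", OF n] by (simp add: EU_eq c_def algebra_simps)
    also have "\<dots> \<le> (\<Sum>k\<in>{1..n}. 8 * (D k ^ 4 + c ^ 4)) / n"
      by (intro divide_right_mono sum_mono quart) auto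
    also have "\<dots> = 8 * ((\<Sum>k\<in>{1..n}. D k ^ 4) / n + c ^ 4)"
      using n by (simp add: sum.distrib sum_distrib_left[symmetric] add_divide_distrib)
    also have "\<dots> \<le> 8 * (B + (1 + B)^4)" using B1[OF n] c4 by simp
    finally have le: "EU n (\<lambda>k. (ln (real k) - ln (real (utilde n k)) - EU n (\<lambda>j. ln (real j))
             + EU n (\<lambda>j. ln (real (utilde n j)))) ^ 4) \<le> 8 * (B + (1 + B)^4)" .
    have "0 \<le> EU n (\<lambda>k. (ln (real k) - ln (real (utilde n k)) - EU n (\<lambda>j. ln (real j))
             + EU n (\<lambda>j. ln (real (utilde n j)))) ^ 4)"
      using n by (simp add: EU_eq sum_nonneg divide_nonneg_nonneg)
    thus "norm (EU n (\<lambda>k. (ln (real k) - ln (real (utilde n k)) - EU n (\<lambda>j. ln (real j))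
             + EU n (\<lambda>j. ln (real (utilde n j)))) ^ 4)) \<le> 8 * (B + (1 + B)^4) * norm (1::real)"
      using le by simp
  qed
  show ?thesis using part1 part2 by blast
qed

end
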